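(* Let $\Theta=\{\theta_1,\dots,\theta_n\}$ with $n\ge 2$, and suppose the pair $(\mathcal{E},C)$ satisfies Assumption (A) below. Then there exists a contract $(u,d)$ with $u>0,d>0$ that screens the uninformed Bob. That is, $W(\mu)\ge 0$ for every prior $\mu\in\Delta$, while $$\sup_{\sigma\in\Delta}\ \min_{1\le j\le n}\,(u-d\,\sigma_j)<0.$$ Assumption (A): there exist $\varepsilon>0$, $\eta>0$ and $T\in\mathbb{R}_+$ such that for every $\mu\in\Delta$ with $\|\mu-\mathbf{\tfrac1n}\|<\eta$ there is an experiment $E_\mu\in\mathcal{E}$ with $\Upsilon(E_\mu,\mu)>\varepsilon$ and $C(E_\mu,\mu)\le T$. Here $\mathbf{\tfrac1n}$ denotes the uniform distribution $(1/n,\dots,1/n)$.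
   Context: **States and beliefs.** $\Theta=\{\theta_1,\dots,\theta_n\}$ is a finite set of states. $\Delta=\Delta(\Theta)$ is the simplex of probability vectors $\mu=(\mu_1,\dots,\mu_n)$. **Experiments.** An experiment is a pair $E=(S,\chi)$, where $S$ is a measurable signal space and $\chi(\theta_i)=P_i$ is a probability measure on $S$. Fix a $\sigma$-finite measure $\nu$ on $S$ dominating $P_1,\dots,P_n$, and let $p_i=dP_i/d\nu$. Define $$\Upsilon(E,\mu)=\min_i \mu_i-\int_S \min_i\{\mu_i p_i(s)\}\,d\nu(s),$$ which does not depend on the choice of $\nu$. $\mathcal{E}$ is a given set of available experiments. $C:\mathcal{E}\times\Delta\to\mathbb{R}_+\cup\{\infty\}$ is a cost functional, with $C(E,\mu)$ the cost of experiment $E$ to a Bob with prior $\mu$. **Contract.** A contract is a pair $(u,d)$ with $u>0$ and $d>0$. Bob either rejects (payoff $0$) or accepts. If he accepts, he receives $u$ and announces a state (possibly at random). The true state is then drawn, and Bob pays $d$ if the announced state is the realized state. **Informed Bob.** The informed Bob has a prior $\mu\in\Delta$ and is an expected-utility maximizer. He may either acquire no information, or acquire one experiment $E\in\mathcal{E}$ at cost $C(E,\mu)$ and observe its signal. He then announces a state of minimal posterior probability. His optimal payoff from accepting is $$W(\mu)=\max\Big\{u-d\min_i\mu_i,\ \sup_{E\in\mathcal{E}}\Big[u-d\int_S\min_i\{\mu_ip_i(s)\}\,d\nu(s)-C(E,\mu)\Big]\Big\}.$$ He (weakly) prefers to accept iff $W(\mu)\ge 0$. **Uninformed Bob.** The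 uninformed Bob cannot acquire information. He evaluates a randomized announcement $\sigma\in\Delta$ by its worst-case payoff over states, $\min_j(u-d\sigma_j)$. He strictly prefers to reject iff $\sup_{\sigma\in\Delta}\min_j(u-d\sigma_j)<0$. **Screening.** A contract screens the uninformed Bob if the informed Bob prefers to accept it for every prior $\mu\in\Delta$, and the uninformed Bob strictly prefers to reject it. *)

theory Defs
  imports "HOL-Probability.Probability"
begin

definition belief_simplex :: "('n::finite \<Rightarrow> real) set" where
  "belief_simplex = {\<mu>. (\<forall>i. 0 \<le> \<mu> i) \<and> (\<Sum>i\<in>UNIV. \<mu> i) = 1}"

definition uniform_belief :: "'n::finite \<Rightarrow> real" where
  "uniform_belief = (\<lambda>i. 1 / real CARD('n))"

definition euclid_dist :: "('n::finite \<Rightarrow> real) \<Rightarrow> ('n \<Rightarrow> real) \<Rightarrow> real" where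
  "euclid_dist \<mu> \<nu> = sqrt (\<Sum>i\<in>UNIV. (\<mu> i - \<nu> i)^2)"

(* An experiment is represented by a dominating sigma-finite measure nu on the
  signal space together with densities p i = dP_i/dnu; the signal distribution in
  state i is P_i = density nu (p i), required to be a probability measure. *)

type_synonym ('s, 'n) exper = "'s measure \<times> ('n \<Rightarrow> 's \<Rightarrow> real)"

definition is_experiment :: "('s, 'n) exper \<Rightarrow> bool" where
  "is_experiment E \<longleftrightarrow>
     sigma_finite_measure (fst E) \<and>
     (\<forall>i. snd E i \<in> borel_measurable (fst E) \<and> (\<forall>s\<in>space (fst E). 0 \<le> snd E i s) \<and>
          prob_space (density (fst E) (\<lambda>s. ennreal (snd E i s))))"

definition signal_dist :: "('s, 'n) exper \<Rightarrow> 'n \<Rightarrow> 's measure" where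
  "signal_dist E i = density (fst E) (\<lambda>s. ennreal (snd E i s))"

definition min_integral :: "('s, 'n::finite) exper \<Rightarrow> ('n \<Rightarrow> real) \<Rightarrow> real" where
  "min_integral E \<mu> = (\<integral>s. Min ((\<lambda>i. \<mu> i * snd E i s) ` UNIV) \<partial>(fst E))"

definition Upsilon :: "('s, 'n::finite) exper \<Rightarrow> ('n \<Rightarrow> real) \<Rightarrow> real" where
  "Upsilon E \<mu> = Min (\<mu> ` UNIV) - min_integral E \<mu>"

(* Optimal payoff of the informed Bob from accepting (u,d); costs in [0,infinity]. *)
definition W_val :: "('s, 'n::finite) exper set \<Rightarrow> (('s, 'n) exper \<Rightarrow> ('n \<Rightarrow> real) \<Rightarrow> ereal)
     \<Rightarrow> real \<Rightarrow> real \<Rightarrow> ('n \<Rightarrow> real) \<Rightarrow> ereal" where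
  "W_val \<E> C u d \<mu> = max (ereal (u - d * Min (\<mu> ` UNIV)))
      (SUP E\<in>\<E>. ereal (u - d * min_integral E \<mu>) - C E \<mu>)"

definition uninformed_value :: "real \<Rightarrow> real \<Rightarrow> 'n::finite itself \<Rightarrow> real" where
  "uninformed_value u d _ = (SUP \<sigma>\<in>(belief_simplex :: ('n \<Rightarrow> real) set). Min ((\<lambda>j. u - d * \<sigma> j) ` UNIV))"

definition assumption_A :: "('s, 'n::finite) exper set \<Rightarrow> (('s, 'n) exper \<Rightarrow> ('n \<Rightarrow> real) \<Rightarrow> ereal) \<Rightarrow> bool" where
  "assumption_A \<E> C \<longleftrightarrow> (\<exists>\<epsilon>>0. \<exists>\<eta>>0. \<exists>T\<ge>0. \<forall>\<mu>\<in>belief_simplex. euclid_dist \<mu> uniform_belief < \<eta> \<longrightarrow>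
       (\<exists>E\<in>\<E>. Upsilon E \<mu> > \<epsilon> \<and> C E \<mu> \<le> ereal T))"

definition screens :: "('s, 'n::finite) exper set \<Rightarrow> (('s, 'n) exper \<Rightarrow> ('n \<Rightarrow> real) \<Rightarrow> ereal)
     \<Rightarrow> real \<Rightarrow> real \<Rightarrow> bool" where
  "screens \<E> C u d \<longleftrightarrow> (\<forall>\<mu>\<in>belief_simplex. W_val \<E> C u d \<mu> \<ge> 0) \<and> uninformed_value u d TYPE('n) < 0"

end

theory Submission
  imports Defs
begin

lemma simplex_exists_ge:
  assumes "(\<mu>::'n::finite \<Rightarrow> real) \<in> belief_simplex"
  shows "\<exists>j. \<mu> j \<ge> 1 / real CARD('n)"
proof (rule ccontr)
  assume "\<not> ?thesis"
  hence "\<forall>j. \<mu> j < 1 / real CARD('n)" by (auto simp: not_le)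
  hence "(\<Sum>i\<in>UNIV. \<mu> i) < (\<Sum>i\<in>(UNIV::'n set). 1 / real CARD('n))"
    by (intro sum_strict_mono) auto
  thus False using assms by (simp add: belief_simplex_def)
qed

lemma simplex_exists_le:
  assumes "(\<mu>::'n::finite \<Rightarrow> real) \<in> belief_simplex"
  shows "\<exists>j. \<mu> j \<le> 1 / real CARD('n)"
proof (rule ccontr)
  assume "\<not> ?thesis"
  hence "\<forall>j. \<mu> j > 1 / real CARD('n)" by (auto simp: not_le)
  hence "(\<Sum>i\<in>UNIV. \<mu> i) > (\<Sum>i\<in>(UNIV::'n set). 1 / real CARD('n))"
    by (intro sum_strict_mono) auto
  thus False using assms by (simp add: belief_simplex_def)
qed

lemma close_dist:
  assumes "(\<mu>::'n::finite \<Rightarrow> real) \<in> belief_simplex"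
    and t: "t > 0" and low: "\<forall>i. \<mu> i > 1 / real CARD('n) - t"
    and eta: "\<eta> > 0" "t \<le> \<eta> / (4 * real CARD('n)^2)"
  shows "euclid_dist \<mu> uniform_belief < \<eta>"
proof -
  define N where "N = real CARD('n)"
  have N1: "N \<ge> 1" unfolding N_def by simp
  define a where "a i = \<mu> i - 1/N" for i
  have suma: "(\<Sum>i\<in>UNIV. a i) = 0"
    using assms(1) unfolding a_def belief_simplex_def N_def by (simp add: sum_subtractf)
  have alow: "a i > - t" for i using low[rule_format, of i] unfolding a_def N_def by linarith
  have absle: "\<bar>a i\<bar> \<le> a i + 2 * t" for i using alow[of i] t by auto
  have "(\<Sum>i\<in>UNIV. \<bar>a i\<bar>) \<le> (\<Sum>i\<in>UNIV. a i + 2 * t)"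
    by (intro sum_mono absle)
  also have "\<dots> = 2 * t * N" using suma by (simp add: sum.distrib N_def)
  finally have sabs: "(\<Sum>i\<in>UNIV. \<bar>a i\<bar>) \<le> 2 * t * N" .
  have ai: "\<bar>a i\<bar> \<le> 2 * t * N" for i
  proof -
    have "\<bar>a i\<bar> \<le> (\<Sum>i\<in>UNIV. \<bar>a i\<bar>)"
      by (rule member_le_sum) auto
    thus ?thesis using sabs by linarith
  qed
  have sq: "(a i)^2 \<le> (2 * t * N)^2" for i
    using ai[of i] by (metis abs_ge_zero power2_abs power_mono)
  have "(\<Sum>i\<in>UNIV. (a i)^2) \<le> (\<Sum>i\<in>(UNIV::'n set). (2 * t * N)^2)"
    by (intro sum_mono sq)
  also have "\<dots> = N * (2*t*N)^2" by (simp add: N_def)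
  also have "\<dots> < \<eta>^2"
  proof -
    have tN: "t * (4 * N^2) \<le> \<eta>" using eta(2) N1 unfolding N_def
      by (simp add: field_simps)
    have "N * (2*t*N)^2 = (t * (4*N^2)) * (t * (4 * N^2)) / (4 * N)"
      using N1 by (simp add: field_simps power2_eq_square)
    also have "\<dots> \<le> \<eta> * \<eta> / (4 * N)"
      using tN t N1 eta(1) by (intro divide_right_mono mult_mono) auto
    also have "\<dots> < \<eta> * \<eta>"
      using N1 eta(1) by (simp add: field_simps)
    finally show ?thesis by (simp add: power2_eq_square)
  qed
  finally have "(\<Sum>i\<in>UNIV. (a i)^2) < \<eta>^2" .
  hence "sqrt (\<Sum>i\<in>UNIV. (a i)^2) < sqrt (\<eta>^2)" by (simp only: real_sqrt_less_iff)
  thus ?thesis using eta(1) unfolding euclid_dist_def uniform_belief_def a_def N_def by simp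
qed

theorem theorem1:
  fixes \<E> :: "('s, 'n::finite) exper set"
    and C :: "('s, 'n) exper \<Rightarrow> ('n \<Rightarrow> real) \<Rightarrow> ereal"
  assumes "CARD('n) \<ge> 2"
    and "\<forall>E\<in>\<E>. is_experiment E"
    and "\<forall>E \<mu>. C E \<mu> \<ge> 0"
    and "assumption_A \<E> C"
  shows "\<exists>u d. u > 0 \<and> d > 0 \<and> screens \<E> C u d"
proof -
  define N where "N = real CARD('n)"
  have N1: "N \<ge> 1" unfolding N_def by simp
  obtain \<epsilon> \<eta> T where ep: "\<epsilon> > 0" and et: "\<eta> > 0" and T: "T \<ge> 0" and
    A: "\<forall>\<mu>\<in>belief_simplex. euclid_dist \<mu> uniform_belief < \<eta> \<longrightarrow>
       (\<exists>E\<in>\<E>. Upsilon E \<mu> > \<epsilon> \<and> C E \<mu> \<le> ereal T)"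
    using assms(4) unfolding assumption_A_def by blast
  define t where "t = min (\<eta> / (4 * N^2)) (min (\<epsilon>/2) (1/(2*N)))"
  have tpos: "t > 0" using et ep N1 by (simp add: t_def)
  have t1: "t \<le> \<eta> / (4 * N^2)" "t \<le> \<epsilon>/2" "t \<le> 1/(2*N)" by (auto simp: t_def)
  have tN: "t < 1/N" using t1(3) tpos N1 by (simp add: field_simps)
  define d where "d = 2 * (T + 1) / \<epsilon>"
  define u where "u = d * (1/N - t)"
  have dpos: "d > 0" using T ep by (simp add: d_def)
  have upos: "u > 0" using dpos tN by (simp add: u_def)
  have deps: "d * \<epsilon> = 2 * (T + 1)" using ep by (simp add: d_def)
  have W: "W_val \<E> C u d \<mu> \<ge> 0" if mu: "\<mu> \<in> belief_simplex" for \<mu>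
  proof (cases "Min (\<mu> ` UNIV) \<le> 1/N - t")
    case True
    have "u - d * Min (\<mu> ` UNIV) \<ge> 0"
      using mult_left_mono[OF True less_imp_le[OF dpos]] by (simp add: u_def)
    thus ?thesis unfolding W_val_def by (simp add: le_max_iff_disj)
  next
    case False
    hence low: "\<forall>i. \<mu> i > 1/N - t" by (auto simp: not_le Min_gr_iff)
    have "euclid_dist \<mu> uniform_belief < \<eta>"
      using close_dist[OF mu tpos _ et] low t1(1) unfolding N_def by auto
    then obtain E where E: "E \<in> \<E>" "Upsilon E \<mu> > \<epsilon>" "C E \<mu> \<le> ereal T"
      using A mu by blast
    obtain c where c: "C E \<mu> = ereal c" "0 \<le> c" "c \<le> T"
  proof -
      have "C E \<mu> \<ge> 0" using assms(3) by blast
      thus ?thesis using E(3) that by (cases "C E \<mu>") auto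
    qed
    obtain j where j: "\<mu> j \<le> 1/N" using simplex_exists_le[OF mu] unfolding N_def by auto
    have "Min (\<mu> ` UNIV) \<le> \<mu> j" by simp
    hence mle: "Min (\<mu> ` UNIV) \<le> 1/N" using j by linarith
    have mi: "min_integral E \<mu> < Min (\<mu> ` UNIV) - \<epsilon>"
      using E(2) unfolding Upsilon_def by simp
    have "d * min_integral E \<mu> \<le> d * (1/N - \<epsilon>)"
      using mi mle dpos by (intro mult_left_mono) auto
    hence "u - d * min_integral E \<mu> - c \<ge> d * \<epsilon> - d * t - T"
      using c by (simp add: u_def algebra_simps)
    moreover have "d * t \<le> d * (\<epsilon>/2)" using t1(2) dpos by (intro mult_left_mono) auto
    ultimately have pos: "u - d * min_integral E \<mu> - c \<ge> 0" using deps T by (simp add: field_simps)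
    have "0 \<le> ereal (u - d * min_integral E \<mu>) - C E \<mu>" using pos c by simp
    also have "\<dots> \<le> (SUP E\<in>\<E>. ereal (u - d * min_integral E \<mu>) - C E \<mu>)"
      using E(1) by (rule SUP_upper)
    finally show ?thesis unfolding W_val_def by (simp add: le_max_iff_disj)
  qed
  have ne: "(belief_simplex :: ('n \<Rightarrow> real) set) \<noteq> {}"
  proof -
    have "(uniform_belief :: 'n \<Rightarrow> real) \<in> belief_simplex"
      by (simp add: belief_simplex_def uniform_belief_def)
    thus ?thesis by auto
  qed
  have "uninformed_value u d TYPE('n) \<le> u - d / N"
    unfolding uninformed_value_def
  proof (rule cSUP_least[OF ne])
    fix \<sigma> :: "'n \<Rightarrow> real" assume s: "\<sigma> \<in> belief_simplex"
    obtain j where j: "\<sigma> j \<ge> 1/N" using simplex_exists_ge[OF s] unfolding N_def by auto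
    have "Min ((\<lambda>j. u - d * \<sigma> j) ` UNIV) \<le> u - d * \<sigma> j" by (rule Min_le) auto
    also have "\<dots> \<le> u - d * (1/N)" using mult_left_mono[OF j less_imp_le[OF dpos]] by simp
    finally show "Min ((\<lambda>j. u - d * \<sigma> j) ` UNIV) \<le> u - d / N" by simp
  qed
  also have "u - d / N < 0" using dpos tpos by (simp add: u_def algebra_simps)
  finally have "uninformed_value u d TYPE('n) < 0" .
  thus ?thesis using W upos dpos unfolding screens_def by blast
qed

end
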